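(* Let $\rho:\mathbb{Z}\to[0,\infty)$ be a weight with finite moments, and let $f,g$ be polynomials with $\deg f\le2$, $\deg g\le1$, satisfying $f(x+1)\rho(x+1)-f(x)\rho(x)=g(x)\rho(x)$ for all $x\in\mathbb{Z}$, with $\rho(x)f(x)$ vanishing at the end points of the support of $\rho$. Let $\{p_n\}_{n\ge0}$ be the monic orthogonal polynomials for $\rho$, $\sum_{x}p_mp_n\rho=h_n\delta_{n,m}$, $h_n>0$, let $\mathcal{A}_{\rm l}=g(x)T+f(x)(\Delta+\nabla)$ and let $c_n:=-\sum_{x\in\mathbb{Z}}p_{n+1}(x)(\mathcal{A}_{\rm l}p_n)(x)\rho(x)$. Put $\omega(x)=f(x+1)\rho(x+1)$ and $\langle\phi,\psi\rangle_{s,\omega}=\sum_{x\in\mathbb{Z}}[\phi(x)\psi(x+1)-\phi(x+1)\psi(x)]\omega(x)$, and assume the Pfaffians $\tau_{2n}=\mathrm{Pf}[\langle x^i,x^j\rangle_{s,\omega}]_{i,j=0}^{2n-1}$ are nonzero for all $n\ge1$. Then the polynomials $$Q_{2n+1}(x)=p_{2n+1}(x),\qquad Q_{2n}(x)=\sum_{l=0}^{n}\Big(\prod_{j=l}^{n-1}\frac{c_{2j+1}}{c_{2j}}\Big)p_{2l}(x)$$ (which, when all $c_{2j+1}\neq0$, equals $\big(\prod_{j=0}^{n-1}\frac{c_{2j+1}}{c_{2j}}\big)\sum_{l=0}^{n}\prod_{j=0}^{l-1}\frac{c_{2j}}{c_{2j+1}}p_{2l}(x)$) are monic skew orthogonal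 polynomials for $\langle\cdot,\cdot\rangle_{s,\omega}$, i.e. $\langle Q_{2n},Q_{2m+1}\rangle_{s,\omega}=-\langle Q_{2m+1},Q_{2n}\rangle_{s,\omega}=u_n\delta_{n,m}$ and $\langle Q_{2m},Q_{2n}\rangle_{s,\omega}=\langle Q_{2m+1},Q_{2n+1}\rangle_{s,\omega}=0$, with normalisation $u_n=c_{2n}$.
   Context: $T\phi(x)=\phi(x+1)$, $\Delta\phi(x)=\phi(x+1)-\phi(x)$, $\nabla\phi(x)=\phi(x)-\phi(x-1)$. Skew orthogonal polynomials are monic, $\deg Q_k=k$, and are unique only up to $Q_{2m+1}\mapsto Q_{2m+1}+\gamma_{2m}Q_{2m}$. It is a fact (from the paper) that $\mathcal{A}_{\rm l}p_n=-\frac{c_n}{h_{n+1}}p_{n+1}+\frac{c_{n-1}}{h_{n-1}}p_{n-1}$. *)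

theory Defs
  imports "HOL-Analysis.Analysis" "HOL-Computational_Algebra.Polynomial"
begin

definition A_low :: "real poly \<Rightarrow> real poly \<Rightarrow> (real \<Rightarrow> real) \<Rightarrow> real \<Rightarrow> real" where
  "A_low f g phi x = poly g x * phi (x + 1)
      + poly f x * ((phi (x + 1) - phi x) + (phi x - phi (x - 1)))"

definition c_coef :: "(int \<Rightarrow> real) \<Rightarrow> real poly \<Rightarrow> real poly \<Rightarrow> (nat \<Rightarrow> real poly) \<Rightarrow> nat \<Rightarrow> real" where
  "c_coef \<rho> f g p n =
     - (\<Sum>\<^sub>\<infinity>x::int. poly (p (Suc n)) (of_int x) * A_low f g (poly (p n)) (of_int x) * \<rho> x)"

definition skew_ip :: "(int \<Rightarrow> real) \<Rightarrow> real poly \<Rightarrow> real poly \<Rightarrow> real poly \<Rightarrow> real" where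
  "skew_ip \<rho> f \<phi> \<psi> =
     (\<Sum>\<^sub>\<infinity>x::int. (poly \<phi> (of_int x) * poly \<psi> (of_int x + 1)
                  - poly \<phi> (of_int x + 1) * poly \<psi> (of_int x))
                 * (poly f (of_int x + 1) * \<rho> (x + 1)))"

definition pfaffian :: "nat \<Rightarrow> (nat \<Rightarrow> nat \<Rightarrow> real) \<Rightarrow> real" where
  "pfaffian n A =
     (\<Sum>\<sigma> | \<sigma> permutes {0..<2*n}. of_int (sign \<sigma>) * (\<Prod>i<n. A (\<sigma> (2*i)) (\<sigma> (2*i+1))))
       / (2 ^ n * fact n)"

definition Q_skew :: "(nat \<Rightarrow> real poly) \<Rightarrow> (nat \<Rightarrow> real) \<Rightarrow> nat \<Rightarrow> real poly" where
  "Q_skew p c k =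
     (if odd k then p k
      else (\<Sum>l\<in>{0..k div 2}. smult (\<Prod>j\<in>{l..<k div 2}. c (2*j+1) / c (2*j)) (p (2*l))))"

end

theory Submission imports Defs begin

lemma summable_on_finsum:
  fixes f :: "'i \<Rightarrow> 'a \<Rightarrow> real"
  assumes "finite I" "\<And>i. i \<in> I \<Longrightarrow> f i summable_on A"
  shows "(\<lambda>x. \<Sum>i\<in>I. f i x) summable_on A"
  using assms by (induction I rule: finite_induct) (auto intro: summable_on_add)

lemma infsum_finsum:
  fixes f :: "'i \<Rightarrow> 'a \<Rightarrow> real"
  assumes "finite I" "\<And>i. i \<in> I \<Longrightarrow> f i summable_on A"
  shows "(\<Sum>\<^sub>\<infinity>x\<in>A. \<Sum>i\<in>I. f i x) = (\<Sum>i\<in>I. \<Sum>\<^sub>\<infinity>x\<in>A. f i x)"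
  using assms
proof (induction I rule: finite_induct)
  case (insert j I)
  have "(\<Sum>\<^sub>\<infinity>x\<in>A. \<Sum>i\<in>insert j I. f i x) = (\<Sum>\<^sub>\<infinity>x\<in>A. f j x + (\<Sum>i\<in>I. f i x))"
    using insert by simp
  also have "\<dots> = (\<Sum>\<^sub>\<infinity>x\<in>A. f j x) + (\<Sum>\<^sub>\<infinity>x\<in>A. \<Sum>i\<in>I. f i x)"
  proof (rule infsum_add)
    show "f j summable_on A" using insert by simp
    show "(\<lambda>x. \<Sum>i\<in>I. f i x) summable_on A"
      by (rule summable_on_finsum) (use insert in auto)
  qed
  finally show ?case using insert by simp
qed simp

definition Sw :: "(int \<Rightarrow> real) \<Rightarrow> real poly \<Rightarrow> real" where
  "Sw \<rho> P = (\<Sum>\<^sub>\<infinity>x::int. poly P (of_int x) * \<rho> x)"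

locale wt =
  fixes \<rho> :: "int \<Rightarrow> real"
  assumes nn: "\<And>x. \<rho> x \<ge> 0"
  and mom: "\<And>k::nat. (\<lambda>x::int. \<bar>real_of_int x\<bar> ^ k * \<rho> x) summable_on UNIV"
begin

lemma summ_mono: "(\<lambda>x::int. real_of_int x ^ k * \<rho> x) summable_on UNIV"
proof -
  have "(\<lambda>x::int. norm (real_of_int x ^ k * \<rho> x)) = (\<lambda>x::int. \<bar>real_of_int x\<bar> ^ k * \<rho> x)"
    by (rule ext) (simp add: abs_mult power_abs abs_of_nonneg[OF nn])
  then have "(\<lambda>x::int. norm (real_of_int x ^ k * \<rho> x)) summable_on UNIV"
    using mom[of k] by simp
  then show ?thesis using summable_on_iff_abs_summable_on_real by blast
qed

lemma summ_poly: "(\<lambda>x::int. poly P (of_int x) * \<rho> x) summable_on UNIV"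
proof -
  have "(\<lambda>x::int. poly P (of_int x) * \<rho> x) = (\<lambda>x. \<Sum>i\<le>degree P. coeff P i * (real_of_int x ^ i * \<rho> x))"
    by (simp add: poly_altdef sum_distrib_right mult.assoc)
  moreover have "(\<lambda>x. \<Sum>i\<le>degree P. coeff P i * (real_of_int x ^ i * \<rho> x)) summable_on UNIV"
    by (rule summable_on_finsum) (auto intro: summable_on_cmult_right summ_mono)
  ultimately show ?thesis by simp
qed

lemma Sw_add: "Sw \<rho> (P + R) = Sw \<rho> P + Sw \<rho> R"
  unfolding Sw_def by (simp add: distrib_right infsum_add summ_poly)

lemma Sw_smult: "Sw \<rho> (smult a P) = a * Sw \<rho> P"
  unfolding Sw_def by (simp add: mult.assoc infsum_cmult_right summ_poly)

lemma Sw_uminus: "Sw \<rho> (- P) = - Sw \<rho> P"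
  unfolding Sw_def by (simp add: infsum_uminus)

lemma Sw_diff: "Sw \<rho> (P - R) = Sw \<rho> P - Sw \<rho> R"
  using Sw_add[of P "-R"] Sw_uminus[of R] by simp

lemma Sw_sum: "finite I \<Longrightarrow> Sw \<rho> (\<Sum>i\<in>I. smult (a i) (R i)) = (\<Sum>i\<in>I. a i * Sw \<rho> (R i))"
proof (induction I rule: finite_induct)
  case empty
  show ?case using Sw_smult[of 0 0] by simp
next
  case (insert j I)
  then show ?case by (simp add: Sw_add Sw_smult)
qed

lemma Sw_shift: "(\<Sum>\<^sub>\<infinity>x::int. G (x + 1)) = (\<Sum>\<^sub>\<infinity>x::int. (G x :: real))"
proof -
  have "bij_betw (\<lambda>x::int. x + 1) UNIV UNIV"
    by (rule bij_betwI[where g="\<lambda>x. x - 1"]) auto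
  then show ?thesis by (rule infsum_reindex_bij_betw)
qed

end

lemma infsum_diff_real:
  fixes f g :: "'a \<Rightarrow> real"
  assumes "f summable_on A" "g summable_on A"
  shows "(\<Sum>\<^sub>\<infinity>x\<in>A. f x - g x) = infsum f A - infsum g A"
proof -
  have "(\<lambda>x. - g x) summable_on A" using assms(2) by (simp only: summable_on_uminus)
  have "(\<Sum>\<^sub>\<infinity>x\<in>A. f x + - g x) = infsum f A + (\<Sum>\<^sub>\<infinity>x\<in>A. - g x)"
    by (rule infsum_add[OF assms(1) \<open>(\<lambda>x. - g x) summable_on A\<close>])
  then show ?thesis by (simp add: infsum_uminus)
qed

definition Ap :: "real poly \<Rightarrow> real poly \<Rightarrow> real poly \<Rightarrow> real poly" where
  "Ap f g \<psi> = (f + g) * pcompose \<psi> [:1,1:] - f * pcompose \<psi> [:-1,1:]"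

locale skw = wt +
  fixes f g :: "real poly" and p :: "nat \<Rightarrow> real poly" and h :: "nat \<Rightarrow> real"
  assumes deg_f: "degree f \<le> 2" and deg_g: "degree g \<le> 1"
    and pearson: "\<And>x::int. poly f (of_int x + 1) * \<rho> (x + 1) - poly f (of_int x) * \<rho> x
                            = poly g (of_int x) * \<rho> x"
    and p_monic: "\<And>n. lead_coeff (p n) = 1"
    and p_deg: "\<And>n. degree (p n) = n"
    and p_orth: "\<And>m n. (\<Sum>\<^sub>\<infinity>x::int. poly (p m) (of_int x) * poly (p n) (of_int x) * \<rho> x)
                         = (if n = m then h n else 0)"
begin

lemma skew_Sw: "skew_ip \<rho> f \<phi> \<psi> = Sw \<rho> (\<phi> * Ap f g \<psi>)"
proof -
  define T where "T = (\<lambda>x::int. poly (\<phi> * pcompose \<psi> [:1,1:] * (f + g)) (of_int x) * \<rho> x)"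
  define U where "U = (\<lambda>x::int. poly (\<phi> * pcompose \<psi> [:-1,1:] * f) (of_int x) * \<rho> x)"
  have pt: "(poly \<phi> (of_int x) * poly \<psi> (of_int x + 1) - poly \<phi> (of_int x + 1) * poly \<psi> (of_int x))
                 * (poly f (of_int x + 1) * \<rho> (x + 1)) = T x - U (x + 1)" for x
  proof -
    have e: "poly f (of_int x + 1) * \<rho> (x + 1) = (poly f (of_int x) + poly g (of_int x)) * \<rho> x"
      using pearson[of x] by (simp add: algebra_simps)
    have t: "T x = poly \<phi> (of_int x) * poly \<psi> (of_int x + 1) * ((poly f (of_int x) + poly g (of_int x)) * \<rho> x)"
      unfolding T_def by (simp add: poly_pcompose algebra_simps)
    then have t2: "T x = poly \<phi> (of_int x) * poly \<psi> (of_int x + 1) * (poly f (of_int x + 1) * \<rho> (x + 1))"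
      by (simp only: e[symmetric])
    have u: "U (x + 1) = poly \<phi> (of_int x + 1) * poly \<psi> (of_int x) * (poly f (of_int x + 1) * \<rho> (x + 1))"
      unfolding U_def by (simp add: poly_pcompose algebra_simps)
    show ?thesis unfolding t2 u by (simp add: algebra_simps)
  qed
  have sT: "T summable_on UNIV" unfolding T_def by (rule summ_poly)
  have bij: "bij_betw (\<lambda>x::int. x + 1) UNIV UNIV"
    by (rule bij_betwI[where g="\<lambda>x. x - 1"]) auto
  have sU: "U summable_on UNIV" unfolding U_def by (rule summ_poly)
  have sU1: "(\<lambda>x. U (x + 1)) summable_on UNIV"
    using summable_on_reindex_bij_betw[OF bij, of U] sU by simp
  have "skew_ip \<rho> f \<phi> \<psi> = (\<Sum>\<^sub>\<infinity>x::int. T x - U (x + 1))"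
    unfolding skew_ip_def pt ..
  also have "\<dots> = infsum T UNIV - (\<Sum>\<^sub>\<infinity>x::int. U (x + 1))"
    by (rule infsum_diff_real[OF sT sU1])
  also have "(\<Sum>\<^sub>\<infinity>x::int. U (x + 1)) = infsum U UNIV"
    by (rule infsum_reindex_bij_betw[OF bij])
  also have "infsum T UNIV - infsum U UNIV
      = Sw \<rho> (\<phi> * pcompose \<psi> [:1,1:] * (f + g)) - Sw \<rho> (\<phi> * pcompose \<psi> [:-1,1:] * f)"
    unfolding T_def U_def Sw_def ..
  also have "\<dots> = Sw \<rho> (\<phi> * pcompose \<psi> [:1,1:] * (f + g) - \<phi> * pcompose \<psi> [:-1,1:] * f)"
    by (rule Sw_diff[symmetric])
  also have "\<phi> * pcompose \<psi> [:1,1:] * (f + g) - \<phi> * pcompose \<psi> [:-1,1:] * f = \<phi> * Ap f g \<psi>"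
    unfolding Ap_def by (simp add: algebra_simps)
  finally show ?thesis .
qed

lemma skew_antisym: "skew_ip \<rho> f \<phi> \<psi> = - skew_ip \<rho> f \<psi> \<phi>"
proof -
  have "skew_ip \<rho> f \<psi> \<phi> = (\<Sum>\<^sub>\<infinity>x::int. - ((poly \<phi> (of_int x) * poly \<psi> (of_int x + 1)
                  - poly \<phi> (of_int x + 1) * poly \<psi> (of_int x)) * (poly f (of_int x + 1) * \<rho> (x + 1))))"
    unfolding skew_ip_def by (rule infsum_cong) (simp add: algebra_simps)
  then show ?thesis unfolding skew_ip_def by (simp add: infsum_uminus)
qed

lemma A_low_Ap: "A_low f g (poly \<psi>) y = poly (Ap f g \<psi>) y"
  unfolding A_low_def Ap_def by (simp add: poly_pcompose algebra_simps)

lemma c_skew: "c_coef \<rho> f g p n = skew_ip \<rho> f (p n) (p (Suc n))"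
proof -
  have "c_coef \<rho> f g p n = - Sw \<rho> (p (Suc n) * Ap f g (p n))"
    unfolding c_coef_def Sw_def by (simp only: A_low_Ap poly_mult)
  also have "\<dots> = - skew_ip \<rho> f (p (Suc n)) (p n)" by (simp only: skew_Sw)
  also have "\<dots> = skew_ip \<rho> f (p n) (p (Suc n))" using skew_antisym[of "p (Suc n)" "p n"] by (simp only:)
  finally show ?thesis .
qed

end

context skw begin

lemma deg_Ap: "degree (Ap f g \<psi>) \<le> degree \<psi> + 1"
proof -
  define P where "P = pcompose \<psi> [:1,1:]"
  define M where "M = pcompose \<psi> [:-1,1:]"
  define D where "D = P - M"
  define n where "n = degree \<psi>"
  have eq: "Ap f g \<psi> = g * P + f * D" unfolding Ap_def P_def M_def D_def by (simp add: algebra_simps)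
  have dP: "degree P = n" unfolding P_def n_def by (simp add: degree_pcompose)
  have dM: "degree M = n" unfolding M_def n_def by (simp add: degree_pcompose)
  have lP: "coeff P n = lead_coeff \<psi>" using dP lead_coeff_comp[of "[:1,1:]" \<psi>] unfolding P_def n_def
    by simp
  have lM: "coeff M n = lead_coeff \<psi>" using dM lead_coeff_comp[of "[:-1,1:]" \<psi>] unfolding M_def n_def
    by simp
  have cD: "coeff D n = 0" unfolding D_def using lP lM by simp
  have dD: "degree D \<le> n" unfolding D_def using dP dM degree_diff_le by (metis le_refl)
  have fD: "degree (f * D) \<le> n + 1"
  proof (cases "D = 0")
    case True then show ?thesis by simp
  next
    case False
    then have "coeff D (degree D) \<noteq> 0" by simp
    then have "degree D \<noteq> n" using cD by auto
    then have "degree D + 1 \<le> n" using dD by simp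
    then show ?thesis using degree_mult_le[of f D] deg_f by simp
  qed
  have gP: "degree (g * P) \<le> n + 1" using degree_mult_le[of g P] deg_g dP by simp
  show ?thesis unfolding eq using degree_add_le[OF gP fD] n_def by simp
qed

lemma p0: "p 0 = 1"
proof (rule poly_eqI)
  fix i
  show "coeff (p 0) i = coeff 1 i"
  proof (cases i)
    case 0
    then show ?thesis using p_monic[of 0] p_deg[of 0] by simp
  next
    case (Suc m)
    then show ?thesis using coeff_eq_0[of "p 0" i] p_deg[of 0] by simp
  qed
qed

lemma span_zero_aux:
  fixes L :: "real poly \<Rightarrow> real"
  assumes add: "\<And>a b. L (a + b) = L a + L b" and sm: "\<And>c a. L (smult c a) = c * L a"
  shows "\<forall>q. (\<forall>j\<le>D. L (p j) = 0) \<longrightarrow> degree q \<le> D \<longrightarrow> L q = 0"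
proof (induction D)
  case 0
  show ?case
  proof (intro allI impI)
    fix q :: "real poly"
    assume z: "\<forall>j\<le>0. L (p j) = 0" and d: "degree q \<le> 0"
    have "q = smult (coeff q 0) (p 0)"
    proof (rule poly_eqI)
      fix i show "coeff q i = coeff (smult (coeff q 0) (p 0)) i"
        using d coeff_eq_0[of q i] by (cases i) (simp_all add: p0)
    qed
    then show "L q = 0" using sm z by (metis mult_zero_right order_refl)
  qed
next
  case (Suc D)
  show ?case
  proof (intro allI impI)
    fix q :: "real poly"
    assume z: "\<forall>j\<le>Suc D. L (p j) = 0" and d: "degree q \<le> Suc D"
    define c where "c = coeff q (Suc D)"
    define r where "r = q - smult c (p (Suc D))"
    have qr: "q = r + smult c (p (Suc D))" unfolding r_def by simp
    have "degree r \<le> D"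
    proof (rule degree_le, intro allI impI)
      fix i assume "D < i"
      show "coeff r i = 0"
      proof (cases "i = Suc D")
        case True
        have "coeff (p (Suc D)) (Suc D) = 1" using p_monic[of "Suc D"] p_deg[of "Suc D"] by simp
        then show ?thesis unfolding r_def c_def using True by simp
      next
        case False
        then have "i > Suc D" using \<open>D < i\<close> by simp
        then show ?thesis unfolding r_def using coeff_eq_0[of q i] coeff_eq_0[of "p (Suc D)" i] d p_deg[of "Suc D"]
          by simp
      qed
    qed
    then have "L r = 0" using Suc.IH z by simp
    then show "L q = 0" unfolding qr using add sm z by simp
  qed
qed

lemma span_zero:
  fixes L :: "real poly \<Rightarrow> real"
  assumes add: "\<And>a b. L (a + b) = L a + L b" and sm: "\<And>c a. L (smult c a) = c * L a"
    and z: "\<And>j. j \<le> D \<Longrightarrow> L (p j) = 0" and d: "degree q \<le> D"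
  shows "L q = 0"
  using span_zero_aux[OF add sm, of D] z d by blast

lemma orth_low:
  assumes "degree q < k"
  shows "Sw \<rho> (p k * q) = 0"
proof -
  have k: "degree q \<le> k - 1" using assms by simp
  show ?thesis
  proof (rule span_zero[where L="\<lambda>q. Sw \<rho> (p k * q)", OF _ _ _ k])
    show "Sw \<rho> (p k * (a + b)) = Sw \<rho> (p k * a) + Sw \<rho> (p k * b)" for a b
      by (simp add: distrib_left Sw_add)
    show "Sw \<rho> (p k * smult c a) = c * Sw \<rho> (p k * a)" for c a
      by (simp add: Sw_smult)
    show "Sw \<rho> (p k * p j) = 0" if "j \<le> k - 1" for j
    proof -
      have "j \<noteq> k" using that assms by simp
      have "Sw \<rho> (p k * p j) = (\<Sum>\<^sub>\<infinity>x::int. poly (p k) (of_int x) * poly (p j) (of_int x) * \<rho> x)"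
        unfolding Sw_def by (simp only: poly_mult)
      also have "\<dots> = 0" using p_orth[of k j] \<open>j \<noteq> k\<close> by simp
      finally show ?thesis .
    qed
  qed
qed

abbreviation cc where "cc \<equiv> c_coef \<rho> f g p"

lemma skew_self: "skew_ip \<rho> f a a = 0"
  using skew_antisym[of a a] by simp

lemma skew_far: "Suc j < i \<Longrightarrow> skew_ip \<rho> f (p i) (p j) = 0"
  using orth_low[of "Ap f g (p j)" i] deg_Ap[of "p j"] p_deg[of j] by (simp add: skew_Sw)

lemma skew_pp: "skew_ip \<rho> f (p i) (p j) = (if j = Suc i then cc i else if i = Suc j then - cc j else 0)"
proof -
  consider "j = Suc i" | "i = Suc j" | "i = j" | "Suc j < i" | "Suc i < j" by linarith
  then show ?thesis
  proof cases
    case 1 then show ?thesis by (simp add: c_skew)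
  next
    case 2 then show ?thesis using skew_antisym[of "p i" "p j"] by (simp add: c_skew)
  next
    case 3 then show ?thesis by (simp add: skew_self)
  next
    case 4 then show ?thesis by (simp add: skew_far)
  next
    case 5 then show ?thesis using skew_antisym[of "p i" "p j"] skew_far[of i j] by simp
  qed
qed

lemma skew_add1: "skew_ip \<rho> f (a + b) X = skew_ip \<rho> f a X + skew_ip \<rho> f b X"
  by (simp add: skew_Sw distrib_right Sw_add)

lemma skew_smult1: "skew_ip \<rho> f (smult c a) X = c * skew_ip \<rho> f a X"
  by (simp add: skew_Sw Sw_smult)

lemma skew_add2: "skew_ip \<rho> f X (a + b) = skew_ip \<rho> f X a + skew_ip \<rho> f X b"
  using skew_antisym[of X "a+b"] skew_antisym[of X a] skew_antisym[of X b] skew_add1[of a b X] by simp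

lemma skew_smult2: "skew_ip \<rho> f X (smult c a) = c * skew_ip \<rho> f X a"
  using skew_antisym[of X "smult c a"] skew_antisym[of X a] skew_smult1[of c a X] by simp

lemma skew_sum1: "finite I \<Longrightarrow> skew_ip \<rho> f (\<Sum>l\<in>I. smult (a l) (P l)) X = (\<Sum>l\<in>I. a l * skew_ip \<rho> f (P l) X)"
proof (induction I rule: finite_induct)
  case empty
  then show ?case using skew_smult1[of 0 0 X] by simp
next
  case (insert j I)
  then show ?case by (simp add: skew_add1 skew_smult1)
qed

lemma skew_sum2: "finite I \<Longrightarrow> skew_ip \<rho> f X (\<Sum>l\<in>I. smult (a l) (P l)) = (\<Sum>l\<in>I. a l * skew_ip \<rho> f X (P l))"
proof (induction I rule: finite_induct)
  case empty
  then show ?case using skew_smult2[of X 0 0] by simp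
next
  case (insert j I)
  then show ?case by (simp add: skew_add2 skew_smult2)
qed

end

definition PF :: "(real poly \<Rightarrow> real poly \<Rightarrow> real) \<Rightarrow> nat \<Rightarrow> (nat \<Rightarrow> real poly) \<Rightarrow> real" where
  "PF B N v = (\<Sum>\<sigma> | \<sigma> permutes {0..<2*N}. of_int (sign \<sigma>) * (\<Prod>i<N. B (v (\<sigma> (2*i))) (v (\<sigma> (2*i+1)))))"

lemma pfaffian_PF: "pfaffian N (\<lambda>i j. B (monom 1 i) (monom 1 j)) = PF B N (\<lambda>i. monom 1 i) / (2 ^ N * fact N)"
  unfolding pfaffian_def PF_def by simp

lemma PF_alt:
  assumes kl: "k \<noteq> l" "k < 2*N" "l < 2*N" and eq: "v k = v l"
  shows "PF B N v = 0"
proof -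
  define S where "S = {\<sigma>. \<sigma> permutes {0..<2*N}}"
  define \<tau> where "\<tau> = Transposition.transpose k l"
  define F where "F = (\<lambda>\<sigma>. of_int (sign \<sigma>) * (\<Prod>i<N. B (v (\<sigma> (2*i))) (v (\<sigma> (2*i+1)))))"
  have tS: "\<tau> permutes {0..<2*N}" unfolding \<tau>_def using kl by (intro permutes_swap_id) auto
  have vt: "v (\<tau> x) = v x" for x unfolding \<tau>_def using eq
    by (cases "x = k"; cases "x = l") auto
  have Fs: "F (\<tau> \<circ> \<sigma>) = - F \<sigma>" if "\<sigma> \<in> S" for \<sigma>
  proof -
    have ps: "permutation \<sigma>" using that unfolding S_def
      by (auto intro: permutes_imp_permutation)
    have "sign (\<tau> \<circ> \<sigma>) = sign \<tau> * sign \<sigma>"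
      by (rule sign_compose) (use ps in \<open>auto simp: \<tau>_def permutation_swap_id\<close>)
    also have "sign \<tau> = -1" unfolding \<tau>_def using kl by (simp add: sign_swap_id)
    finally have "sign (\<tau> \<circ> \<sigma>) = - sign \<sigma>" by (simp only: mult_minus1)
    then show ?thesis unfolding F_def by (simp add: vt)
  qed
  have invol: "\<And>\<sigma>. \<tau> \<circ> (\<tau> \<circ> \<sigma>) = \<sigma>" by (simp add: \<tau>_def fun_eq_iff)
  have invol2: "\<tau> \<circ> \<tau> = id" by (simp add: \<tau>_def fun_eq_iff)
  have "sum F S = sum (\<lambda>\<sigma>. F (\<tau> \<circ> \<sigma>)) S"
    apply (rule sum.reindex_bij_witness[where i="\<lambda>\<sigma>. \<tau> \<circ> \<sigma>" and j="\<lambda>\<sigma>. \<tau> \<circ> \<sigma>"])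
    using tS by (auto simp: S_def invol invol2 intro: permutes_compose)
  also have "\<dots> = - sum F S" using Fs by (simp add: sum_negf)
  finally have "sum F S = 0" by simp
  then show ?thesis unfolding PF_def S_def F_def by simp
qed

definition lin :: "(real poly \<Rightarrow> real) \<Rightarrow> bool" where
  "lin \<Phi> \<longleftrightarrow> (\<forall>a b. \<Phi> (a + b) = \<Phi> a + \<Phi> b) \<and> (\<forall>c a. \<Phi> (smult c a) = c * \<Phi> a)"

lemma lin_sum:
  assumes "lin \<Phi>" "finite I"
  shows "\<Phi> (\<Sum>i\<in>I. smult (a i) (u i)) = (\<Sum>i\<in>I. a i * \<Phi> (u i))"
  using assms(2)
proof (induction I rule: finite_induct)
  case empty
  have "\<Phi> (smult 0 0) = 0 * \<Phi> 0" using assms(1) unfolding lin_def by blast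
  then show ?case by simp
next
  case (insert j I)
  then show ?case using assms(1) unfolding lin_def by simp
qed

lemma lin_finsum:
  assumes "finite S" "\<And>s. s \<in> S \<Longrightarrow> lin (\<Phi> s)"
  shows "lin (\<lambda>w. \<Sum>s\<in>S. \<Phi> s w)"
  using assms unfolding lin_def by (simp add: sum.distrib sum_distrib_left)

lemma lin_cmult: "lin \<Phi> \<Longrightarrow> lin (\<lambda>w. c * \<Phi> w)"
  unfolding lin_def by (simp add: algebra_simps)

lemma lin_multc: "lin \<Phi> \<Longrightarrow> lin (\<lambda>w. \<Phi> w * c)"
  unfolding lin_def by (simp add: algebra_simps)

lemma lin_ext: "lin \<Phi> \<Longrightarrow> (\<And>w. \<Psi> w = \<Phi> w) \<Longrightarrow> lin \<Psi>"
  unfolding lin_def by simp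

lemma perm_slot:
  fixes N k :: nat
  assumes \<sigma>: "\<sigma> permutes {0..<2*N}" and k: "k < 2*N"
  obtains i0 where "i0 < N" "\<sigma> (2*i0) = k \<or> \<sigma> (2*i0+1) = k"
    "\<And>i. i < N \<Longrightarrow> i \<noteq> i0 \<Longrightarrow> \<sigma> (2*i) \<noteq> k \<and> \<sigma> (2*i+1) \<noteq> k"
    "\<sigma> (2*i0) \<noteq> \<sigma> (2*i0+1)"
proof -
  define t where "t = inv \<sigma> k"
  have st: "\<sigma> t = k" unfolding t_def using permutes_inverses(1)[OF \<sigma>] .
  have "inv \<sigma> permutes {0..<2*N}" using permutes_inv[OF \<sigma>] .
  then have "t \<in> {0..<2*N}" unfolding t_def using permutes_in_image k by fastforce
  then have tN: "t < 2*N" by simp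
  have inj: "inj \<sigma>" using permutes_inj[OF \<sigma>] .
  define i0 where "i0 = t div 2"
  have "i0 < N" unfolding i0_def using tN by simp
  moreover have "\<sigma> (2*i0) = k \<or> \<sigma> (2*i0+1) = k"
    unfolding i0_def using st by (cases "even t") (auto elim!: evenE oddE)
  moreover have "\<sigma> (2*i) \<noteq> k \<and> \<sigma> (2*i+1) \<noteq> k" if "i \<noteq> i0" for i
  proof -
    have "2*i \<noteq> t" "2*i+1 \<noteq> t" using that unfolding i0_def by auto
    then show ?thesis using inj st unfolding inj_def by metis
  qed
  moreover have "\<sigma> (2*i0) \<noteq> \<sigma> (2*i0+1)" using inj unfolding inj_def by fastforce
  ultimately show ?thesis using that by blast
qed

lemma lin_prod:
  fixes N k :: nat
  assumes \<sigma>: "\<sigma> permutes {0..<2*N}" and k: "k < 2*N"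
    and B1: "\<And>X. lin (\<lambda>w. B w X)" and B2: "\<And>X. lin (\<lambda>w. B X w)"
  shows "lin (\<lambda>w. \<Prod>i<N. B ((v(k:=w)) (\<sigma> (2*i))) ((v(k:=w)) (\<sigma> (2*i+1))))"
proof -
  obtain i0 where i0: "i0 < N" "\<sigma> (2*i0) = k \<or> \<sigma> (2*i0+1) = k"
    and oth: "\<And>i. i < N \<Longrightarrow> i \<noteq> i0 \<Longrightarrow> \<sigma> (2*i) \<noteq> k \<and> \<sigma> (2*i+1) \<noteq> k"
    and ne: "\<sigma> (2*i0) \<noteq> \<sigma> (2*i0+1)"
    using perm_slot[OF \<sigma> k] by blast
  define R where "R = (\<Prod>i\<in>{..<N} - {i0}. B (v (\<sigma> (2*i))) (v (\<sigma> (2*i+1))))"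
  define \<Lambda> where "\<Lambda> = (\<lambda>w. B ((v(k:=w)) (\<sigma> (2*i0))) ((v(k:=w)) (\<sigma> (2*i0+1))))"
  have eq: "(\<Prod>i<N. B ((v(k:=w)) (\<sigma> (2*i))) ((v(k:=w)) (\<sigma> (2*i+1)))) = \<Lambda> w * R" for w
  proof -
    have "(\<Prod>i<N. B ((v(k:=w)) (\<sigma> (2*i))) ((v(k:=w)) (\<sigma> (2*i+1))))
       = \<Lambda> w * (\<Prod>i\<in>{..<N} - {i0}. B ((v(k:=w)) (\<sigma> (2*i))) ((v(k:=w)) (\<sigma> (2*i+1))))"
      unfolding \<Lambda>_def using i0(1) by (subst prod.remove[of _ i0]) auto
    also have "(\<Prod>i\<in>{..<N} - {i0}. B ((v(k:=w)) (\<sigma> (2*i))) ((v(k:=w)) (\<sigma> (2*i+1)))) = R"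
      unfolding R_def by (rule prod.cong) (use oth in auto)
    finally show ?thesis .
  qed
  have "lin \<Lambda>"
  proof (cases "\<sigma> (2*i0) = k")
    case True
    then have "\<sigma> (2*i0+1) \<noteq> k" using ne by simp
    then have e: "\<Lambda> w = B w (v (\<sigma> (2*i0+1)))" for w unfolding \<Lambda>_def using True by simp
    show ?thesis by (rule lin_ext[OF B1]) (rule e)
  next
    case False
    then have "\<sigma> (2*i0+1) = k" using i0(2) by simp
    then have e: "\<Lambda> w = B (v (\<sigma> (2*i0))) w" for w unfolding \<Lambda>_def using False by simp
    show ?thesis by (rule lin_ext[OF B2]) (rule e)
  qed
  then show ?thesis by (rule lin_ext[OF lin_multc]) (rule eq)
qed

lemma lin_PF:
  fixes N k :: nat
  assumes k: "k < 2*N"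
    and B1: "\<And>X. lin (\<lambda>w. B w X)" and B2: "\<And>X. lin (\<lambda>w. B X w)"
  shows "lin (\<lambda>w. PF B N (v(k:=w)))"
  unfolding PF_def
proof (rule lin_finsum)
  show "finite {\<sigma>. \<sigma> permutes {0..<2*N}}" by (rule finite_permutations) simp
  fix \<sigma> assume "\<sigma> \<in> {\<sigma>. \<sigma> permutes {0..<2*N}}"
  then have \<sigma>: "\<sigma> permutes {0..<2*N}" by simp
  show "lin (\<lambda>w. of_int (sign \<sigma>) * (\<Prod>i<N. B ((v(k:=w)) (\<sigma> (2*i))) ((v(k:=w)) (\<sigma> (2*i+1)))))"
    by (rule lin_cmult, rule lin_prod[OF \<sigma> k B1 B2])
qed

lemma PF_zero_slot:
  fixes N k :: nat
  assumes k: "k < 2*N" and z1: "\<And>j. j < 2*N \<Longrightarrow> B w (v j) = 0" and z2: "\<And>j. j < 2*N \<Longrightarrow> B (v j) w = 0"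
    and zw: "B w w = 0"
  shows "PF B N (v(k:=w)) = 0"
  unfolding PF_def
proof (rule sum.neutral, intro ballI)
  fix \<sigma> assume "\<sigma> \<in> {\<sigma>. \<sigma> permutes {0..<2*N}}"
  then have \<sigma>: "\<sigma> permutes {0..<2*N}" by simp
  obtain i0 where i0: "i0 < N" "\<sigma> (2*i0) = k \<or> \<sigma> (2*i0+1) = k"
    using perm_slot[OF \<sigma> k] by blast
  have r: "\<sigma> j < 2*N" if "j < 2*N" for j using permutes_in_image[OF \<sigma>, of j] that by simp
  have Z: "B ((v(k:=w)) (\<sigma> (2*i0))) ((v(k:=w)) (\<sigma> (2*i0+1))) = 0"
    using i0 i0(1) r[of "2*i0"] r[of "2*i0+1"] z1 z2 zw by auto
  have P0: "(\<Prod>i<N. B ((v(k:=w)) (\<sigma> (2*i))) ((v(k:=w)) (\<sigma> (2*i+1)))) = 0"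
    apply (rule prod_zero)
     apply simp
    apply (rule bexI[where x=i0])
     apply (rule Z)
    using i0(1) by simp
  from P0 show "of_int (sign \<sigma>) * (\<Prod>i<N. B ((v(k:=w)) (\<sigma> (2*i))) ((v(k:=w)) (\<sigma> (2*i+1)))) = 0"
    by simp
qed

lemma PF_radical:
  fixes N k :: nat
  assumes k: "k < 2*N"
    and B1: "\<And>X. lin (\<lambda>w. B w X)" and B2: "\<And>X. lin (\<lambda>w. B X w)"
    and dw: "degree w = k" and cw: "coeff w k = 1"
    and z1: "\<And>j. j < 2*N \<Longrightarrow> B w (monom 1 j) = 0" and z2: "\<And>j. j < 2*N \<Longrightarrow> B (monom 1 j) w = 0"
    and zw: "B w w = 0"
  shows "PF B N (\<lambda>i. monom 1 i) = 0"
proof -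
  define v where "v = (\<lambda>i::nat. monom (1::real) i)"
  have w: "w = (\<Sum>i\<le>k. smult (coeff w i) (v i))"
    unfolding v_def using poly_as_sum_of_monoms[of w] dw by (simp add: smult_monom)
  have "PF B N (v(k:=w)) = (\<Sum>i\<le>k. coeff w i * PF B N (v(k:=v i)))"
    by (subst w) (rule lin_sum[OF lin_PF[OF k B1 B2]], simp)
  also have "\<dots> = coeff w k * PF B N (v(k:=v k)) + (\<Sum>i\<in>{..k} - {k}. coeff w i * PF B N (v(k:=v i)))"
    by (subst sum.remove[of _ k]) auto
  also have "(\<Sum>i\<in>{..k} - {k}. coeff w i * PF B N (v(k:=v i))) = 0"
  proof (rule sum.neutral, intro ballI)
    fix i assume "i \<in> {..k} - {k}"
    then have "i \<noteq> k" "i < 2*N" using k by auto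
    then have "PF B N (v(k:=v i)) = 0" using k by (intro PF_alt[of k i]) auto
    then show "coeff w i * PF B N (v(k:=v i)) = 0" by simp
  qed
  finally have "PF B N (v(k:=w)) = PF B N v" by (simp only: cw fun_upd_triv mult.left_neutral add.right_neutral)
  moreover have "PF B N (v(k:=w)) = 0"
    by (rule PF_zero_slot[OF k]) (use z1 z2 zw in \<open>auto simp: v_def\<close>)
  ultimately show ?thesis unfolding v_def by simp
qed


context skw begin

abbreviation aa where "aa n l \<equiv> (\<Prod>j\<in>{l..<n}. cc (2*j+1) / cc (2*j))"

lemma Q_even: "Q_skew p cc (2*n) = (\<Sum>l\<in>{0..n}. smult (aa n l) (p (2*l)))"
  unfolding Q_skew_def by simp

lemma Q_odd: "Q_skew p cc (2*m+1) = p (2*m+1)"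
  unfolding Q_skew_def by simp

lemma aa_rec: "m < n \<Longrightarrow> aa n m = cc (2*m+1) / cc (2*m) * aa n (Suc m)"
  by (simp add: prod.atLeast_Suc_lessThan)

lemma aa_nn: "aa n n = 1" by simp

lemma par1: "(2*m+1 = Suc (2*l)) = (l = m)" for m l :: nat by presburger
lemma par2: "(2*l = Suc (2*m+1)) = (l = Suc m)" for m l :: nat by presburger
lemma par3: "(2*j \<noteq> Suc (2*i))" for i j :: nat by presburger
lemma par4: "(Suc (2*j) \<noteq> Suc (Suc (2*i)))" for i j :: nat by presburger

lemma EE: "skew_ip \<rho> f (p (2*i)) (p (2*j)) = 0"
  using par3[of j i] par3[of i j] by (simp add: skew_pp)

lemma OO: "skew_ip \<rho> f (p (2*i+1)) (p (2*j+1)) = 0"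
  using par4[of j i] par4[of i j] by (simp add: skew_pp)

lemma EO: "skew_ip \<rho> f (Q_skew p cc (2*n)) (p (2*m+1))
   = (if m < n then aa n m * cc (2*m) - aa n (Suc m) * cc (2*m+1) else if m = n then cc (2*n) else 0)"
proof -
  have "skew_ip \<rho> f (Q_skew p cc (2*n)) (p (2*m+1)) = (\<Sum>l\<in>{0..n}. aa n l * skew_ip \<rho> f (p (2*l)) (p (2*m+1)))"
    unfolding Q_even by (rule skew_sum1) simp
  also have "\<dots> = (\<Sum>l\<in>{0..n}. (if l = m then aa n m * cc (2*m) else 0) + (if l = Suc m then - (aa n (Suc m) * cc (2*m+1)) else 0))"
  proof (rule sum.cong[OF refl])
    fix l
    show "aa n l * skew_ip \<rho> f (p (2*l)) (p (2*m+1)) = (if l = m then aa n m * cc (2*m) else 0) + (if l = Suc m then - (aa n (Suc m) * cc (2*m+1)) else 0)"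
      unfolding skew_pp par1 par2 by auto
  qed
  also have "\<dots> = (if m \<in> {0..n} then aa n m * cc (2*m) else 0) + (if Suc m \<in> {0..n} then - (aa n (Suc m) * cc (2*m+1)) else 0)"
    by (simp only: sum.distrib sum.delta finite_atLeastAtMost)
  also have "\<dots> = (if m < n then aa n m * cc (2*m) - aa n (Suc m) * cc (2*m+1) else if m = n then cc (2*n) else 0)"
    by auto
  finally show ?thesis .
qed

lemma EO_zero: "m < n \<Longrightarrow> cc (2*m) \<noteq> 0 \<Longrightarrow> aa n m * cc (2*m) - aa n (Suc m) * cc (2*m+1) = 0"
proof -
  assume a: "m < n" "cc (2*m) \<noteq> 0"
  define A where "A = aa n (Suc m)"
  have "aa n m = cc (2*m+1) / cc (2*m) * A" unfolding A_def by (rule aa_rec[OF a(1)])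
  then have "aa n m * cc (2*m) - A * cc (2*m+1) = 0" using a(2) by simp
  then show ?thesis unfolding A_def .
qed

lemma Q_even_coeff: "coeff (Q_skew p cc (2*n)) i = (\<Sum>l\<in>{0..n}. aa n l * coeff (p (2*l)) i)"
  unfolding Q_even by (simp add: coeff_sum)

lemma Q_even_deg: "degree (Q_skew p cc (2*n)) = 2*n \<and> coeff (Q_skew p cc (2*n)) (2*n) = 1"
proof -
  have hi: "coeff (Q_skew p cc (2*n)) i = 0" if "i > 2*n" for i
    unfolding Q_even_coeff
  proof (rule sum.neutral, intro ballI)
    fix l assume "l \<in> {0..n}"
    then have "degree (p (2*l)) < i" using that p_deg[of "2*l"] by simp
    then show "aa n l * coeff (p (2*l)) i = 0" by (simp add: coeff_eq_0)
  qed
  have c: "coeff (Q_skew p cc (2*n)) (2*n) = 1"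
  proof -
    have "coeff (Q_skew p cc (2*n)) (2*n) = (\<Sum>l\<in>{0..n}. if l = n then 1 else 0)"
      unfolding Q_even_coeff
    proof (rule sum.cong[OF refl])
      fix l assume l: "l \<in> {0..n}"
      show "aa n l * coeff (p (2*l)) (2*n) = (if l = n then 1 else 0)"
      proof (cases "l = n")
        case True
        then show ?thesis using p_monic[of "2*n"] p_deg[of "2*n"] by simp
      next
        case False
        then have "degree (p (2*l)) < 2*n" using l p_deg[of "2*l"] by simp
        then show ?thesis using False by (simp add: coeff_eq_0)
      qed
    qed
    then show ?thesis by simp
  qed
  have "degree (Q_skew p cc (2*n)) \<le> 2*n" by (rule degree_le) (use hi in auto)
  moreover have "2*n \<le> degree (Q_skew p cc (2*n))" by (rule le_degree) (simp add: c)
  ultimately show ?thesis using c by simp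
qed

lemma lin1: "lin (\<lambda>w. skew_ip \<rho> f w X)"
  unfolding lin_def by (simp add: skew_add1 skew_smult1)

lemma lin2: "lin (\<lambda>w. skew_ip \<rho> f X w)"
  unfolding lin_def by (simp add: skew_add2 skew_smult2)

lemma c_even_nz:
  assumes pf: "\<And>n. n \<ge> 1 \<Longrightarrow> pfaffian n (\<lambda>i j. skew_ip \<rho> f (monom 1 i) (monom 1 j)) \<noteq> 0"
  shows "cc (2*m) \<noteq> 0"
proof (induction m rule: less_induct)
  case (less m)
  show ?case
  proof
    assume c0: "cc (2*m) = 0"
    define w where "w = Q_skew p cc (2*m)"
    have zp: "skew_ip \<rho> f w (p j) = 0" if "j \<le> 2*m+1" for j
    proof (cases "even j")
      case True
      then obtain i where j: "j = 2*i" by blast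
      have "skew_ip \<rho> f w (p j) = (\<Sum>l\<in>{0..m}. aa m l * skew_ip \<rho> f (p (2*l)) (p (2*i)))"
        unfolding w_def Q_even j by (rule skew_sum1) simp
      also have "\<dots> = 0" by (simp add: EE)
      finally show ?thesis .
    next
      case False
      then obtain i where j: "j = 2*i+1" by (blast elim: oddE)
      then have im: "i \<le> m" using that by simp
      show ?thesis
      proof (cases "i < m")
        case True
        then show ?thesis unfolding w_def j EO using EO_zero[OF True less.IH[OF True]] by simp
      next
        case False
        then have "i = m" using im by simp
        then show ?thesis unfolding w_def j EO using c0 by simp
      qed
    qed
    have zq: "skew_ip \<rho> f w q = 0" if "degree q \<le> 2*m+1" for q
      by (rule span_zero[where L="\<lambda>q. skew_ip \<rho> f w q", OF skew_add2 skew_smult2 zp that])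
    have dw: "degree w = 2*m" and cw: "coeff w (2*m) = 1" using Q_even_deg[of m] unfolding w_def by auto
    have "PF (skew_ip \<rho> f) (Suc m) (\<lambda>i. monom 1 i) = 0"
    proof (rule PF_radical[OF _ lin1 lin2 dw cw])
      show "2*m < 2 * Suc m" by simp
      show "skew_ip \<rho> f w (monom 1 j) = 0" if "j < 2 * Suc m" for j
        by (rule zq) (use that in \<open>simp add: degree_monom_eq\<close>)
      then show "skew_ip \<rho> f (monom 1 j) w = 0" if "j < 2 * Suc m" for j
        using skew_antisym[of "monom 1 j" w] that by simp
      show "skew_ip \<rho> f w w = 0" by (rule skew_self)
    qed
    then have "pfaffian (Suc m) (\<lambda>i j. skew_ip \<rho> f (monom 1 i) (monom 1 j)) = 0"
      by (simp add: pfaffian_PF)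
    then show False using pf[of "Suc m"] by simp
  qed
qed

end

theorem proposition3p9:
  fixes \<rho> :: "int \<Rightarrow> real" and f g :: "real poly"
    and p :: "nat \<Rightarrow> real poly" and h :: "nat \<Rightarrow> real"
  assumes rho_nonneg: "\<And>x. \<rho> x \<ge> 0"
    and moments: "\<And>k::nat. (\<lambda>x::int. \<bar>real_of_int x\<bar> ^ k * \<rho> x) summable_on UNIV"
    and deg_f: "degree f \<le> 2" and deg_g: "degree g \<le> 1"
    and pearson: "\<And>x::int. poly f (of_int x + 1) * \<rho> (x + 1) - poly f (of_int x) * \<rho> x
                            = poly g (of_int x) * \<rho> x"
    and bdry_low: "\<And>a::int. \<rho> a \<noteq> 0 \<Longrightarrow> (\<forall>x<a. \<rho> x = 0) \<Longrightarrow> poly f (of_int a) * \<rho> a = 0"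
    and bdry_up: "\<And>b::int. \<rho> b \<noteq> 0 \<Longrightarrow> (\<forall>x>b. \<rho> x = 0) \<Longrightarrow> poly f (of_int b) * \<rho> b = 0"
    and bdry_top: "(\<lambda>n::nat. poly f (real n) * \<rho> (int n)) \<longlonglongrightarrow> 0"
    and bdry_bot: "(\<lambda>n::nat. poly f (- real n) * \<rho> (- int n)) \<longlonglongrightarrow> 0"
    and p_monic: "\<And>n. lead_coeff (p n) = 1"
    and p_deg: "\<And>n. degree (p n) = n"
    and p_orth: "\<And>m n. (\<Sum>\<^sub>\<infinity>x::int. poly (p m) (of_int x) * poly (p n) (of_int x) * \<rho> x)
                         = (if n = m then h n else 0)"
    and h_pos: "\<And>n. h n > 0"
    and pf_nonzero: "\<And>n. n \<ge> 1 \<Longrightarrow>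
          pfaffian n (\<lambda>i j. skew_ip \<rho> f (monom 1 i) (monom 1 j)) \<noteq> 0"
  shows "(\<forall>k. lead_coeff (Q_skew p (c_coef \<rho> f g p) k) = 1
              \<and> degree (Q_skew p (c_coef \<rho> f g p) k) = k)
       \<and> (\<forall>n m. skew_ip \<rho> f (Q_skew p (c_coef \<rho> f g p) (2*n)) (Q_skew p (c_coef \<rho> f g p) (2*m+1))
                  = (if n = m then c_coef \<rho> f g p (2*n) else 0)
              \<and> skew_ip \<rho> f (Q_skew p (c_coef \<rho> f g p) (2*m+1)) (Q_skew p (c_coef \<rho> f g p) (2*n))
                  = - (if n = m then c_coef \<rho> f g p (2*n) else 0)
              \<and> skew_ip \<rho> f (Q_skew p (c_coef \<rho> f g p) (2*m)) (Q_skew p (c_coef \<rho> f g p) (2*n)) = 0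
              \<and> skew_ip \<rho> f (Q_skew p (c_coef \<rho> f g p) (2*m+1)) (Q_skew p (c_coef \<rho> f g p) (2*n+1)) = 0)"
proof -
  interpret skw \<rho> f g p h
  proof unfold_locales
    show "\<And>x. \<rho> x \<ge> 0" by (rule rho_nonneg)
    show "\<And>k::nat. (\<lambda>x::int. \<bar>real_of_int x\<bar> ^ k * \<rho> x) summable_on UNIV" by (rule moments)
    show "degree f \<le> 2" by (rule deg_f)
    show "degree g \<le> 1" by (rule deg_g)
    show "\<And>x::int. poly f (of_int x + 1) * \<rho> (x + 1) - poly f (of_int x) * \<rho> x
                            = poly g (of_int x) * \<rho> x" by (rule pearson)
    show "\<And>n. lead_coeff (p n) = 1" by (rule p_monic)
    show "\<And>n. degree (p n) = n" by (rule p_deg)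
    show "\<And>m n. (\<Sum>\<^sub>\<infinity>x::int. poly (p m) (of_int x) * poly (p n) (of_int x) * \<rho> x)
                         = (if n = m then h n else 0)" by (rule p_orth)
  qed
  have cnz: "cc (2*m) \<noteq> 0" for m by (rule c_even_nz[OF pf_nonzero])
  have A: "lead_coeff (Q_skew p cc k) = 1 \<and> degree (Q_skew p cc k) = k" for k
  proof (cases "even k")
    case True
    then obtain n where k: "k = 2*n" by blast
    show ?thesis unfolding k using Q_even_deg[of n] by simp
  next
    case False
    then obtain n where k: "k = 2*n+1" by (blast elim: oddE)
    show ?thesis unfolding k Q_odd using p_monic p_deg by simp
  qed
  have B1: "skew_ip \<rho> f (Q_skew p cc (2*n)) (Q_skew p cc (2*m+1)) = (if n = m then cc (2*n) else 0)" for n m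
  proof -
    have "skew_ip \<rho> f (Q_skew p cc (2*n)) (Q_skew p cc (2*m+1))
      = (if m < n then aa n m * cc (2*m) - aa n (Suc m) * cc (2*m+1) else if m = n then cc (2*n) else 0)"
      unfolding Q_odd by (rule EO)
    also have "\<dots> = (if n = m then cc (2*n) else 0)"
      using EO_zero[of m n, OF _ cnz[of m]] by auto
    finally show ?thesis .
  qed
  have B2: "skew_ip \<rho> f (Q_skew p cc (2*m+1)) (Q_skew p cc (2*n)) = - (if n = m then cc (2*n) else 0)" for n m
    using skew_antisym[of "Q_skew p cc (2*m+1)" "Q_skew p cc (2*n)"] B1[of n m] by simp
  have B3: "skew_ip \<rho> f (Q_skew p cc (2*m)) (Q_skew p cc (2*n)) = 0" for n m
  proof -
    have "skew_ip \<rho> f (Q_skew p cc (2*m)) (Q_skew p cc (2*n))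
       = (\<Sum>l\<in>{0..m}. aa m l * skew_ip \<rho> f (p (2*l)) (Q_skew p cc (2*n)))"
      unfolding Q_even[of m] by (rule skew_sum1) simp
    also have "\<dots> = (\<Sum>l\<in>{0..m}. aa m l * (\<Sum>l'\<in>{0..n}. aa n l' * skew_ip \<rho> f (p (2*l)) (p (2*l'))))"
      unfolding Q_even[of n] by (rule sum.cong[OF refl]) (subst skew_sum2, simp_all)
    also have "\<dots> = 0" by (simp add: EE)
    finally show ?thesis .
  qed
  have B4: "skew_ip \<rho> f (Q_skew p cc (2*m+1)) (Q_skew p cc (2*n+1)) = 0" for n m
    unfolding Q_odd by (rule OO)
  show ?thesis using A B1 B2 B3 B4 by blast
qed

end
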